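(* Let $A=A_s+A_d\epsilon\in\mathbb{DC}^{m\times n}$ with SVD $A=U\Sigma V^*$, $U\in\mathbb{DC}^{m\times m}$, $V\in\mathbb{DC}^{n\times n}$ unitary dual complex matrices, and $$\Sigma=\begin{bmatrix}\Sigma_{1s}&&\\&O&\\&&O\end{bmatrix}+\begin{bmatrix}\Sigma_{1d}&&\\&\Sigma_{2d}&\\&&O\end{bmatrix}\epsilon,$$ where $\Sigma_1=\Sigma_{1s}+\Sigma_{1d}\epsilon=\mathrm{diag}(\mu_1,\dots,\mu_r)$ with $\mu_1\ge\dots\ge\mu_r$ positive appreciable dual real numbers and $\Sigma_{2d}\epsilon=\mathrm{diag}(\mu_{r+1},\dots,\mu_t)$ with $\mu_{r+1}\ge\dots\ge\mu_t$ positive infinitesimal dual real numbers, $r\le t\le\min\{m,n\}$. Let $A^G=V\begin{bmatrix}\Sigma_1^{-1}&O\\O&O\end{bmatrix}U^*$. Then $$A^G\in\arg\min_{X\in\mathbb{DC}^{n\times m}}\|AXA-A\|_F,$$ where the minimum is taken with respect to the total order on dual real numbers; moreover $A^G$ is the minimizer of minimal Frobenius norm among all minimizers, and the optimal value is $\|AA^GA-A\|_F=\|\Sigma_{2d}\|_F\,\epsilon$. In particular, if all nonzero singular values of $A$ are appreciable ($r=t$), then $AA^GA=A$.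
   Context: A dual number is $a=a_s+a_d\epsilon$ where $\epsilon\neq0$, $\epsilon^2=0$, and $\epsilon$ commutes with real/complex numbers; it is appreciable if $a_s\neq0$ and infinitesimal otherwise. Dual reals are totally ordered by: $a>b$ iff $a_s>b_s$, or $a_s=b_s$ and $a_d>b_d$. For appreciable $\mu$, $\mu^{-1}=\mu_s^{-1}-\mu_s^{-2}\mu_d\epsilon$. For a dual complex matrix $A=A_s+A_d\epsilon$, $A^*=A_s^*+A_d^*\epsilon$; unitary means $U^*U=UU^*=I$. The Frobenius norm of a dual complex matrix is the nonnegative dual real number $\|A\|_F=\|A_s\|_F+\frac{\mathrm{tr}(A_s^*A_d+A_d^*A_s)}{2\|A_s\|_F}\epsilon$ if $A_s\neq O$, and $\|A\|_F=\|A_d\|_F\epsilon$ if $A_s=O$. Every $A\in\mathbb{DC}^{m\times n}$ has an SVD of the stated form with unique singular values $\mu_1,\dots,\mu_t$ (with multiplicities). *)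

theory Defs
  imports Complex_Main "Jordan_Normal_Form.Matrix"
begin

text \<open>Dual real numbers a = a_s + a_d eps, represented as pairs (a_s, a_d).\<close>
type_synonym dreal = "real \<times> real"

definition dr_le :: "dreal \<Rightarrow> dreal \<Rightarrow> bool" where
  "dr_le a b \<longleftrightarrow> fst a < fst b \<or> (fst a = fst b \<and> snd a \<le> snd b)"

definition dr_less :: "dreal \<Rightarrow> dreal \<Rightarrow> bool" where
  "dr_less a b \<longleftrightarrow> fst a < fst b \<or> (fst a = fst b \<and> snd a < snd b)"

definition dr_inv :: "dreal \<Rightarrow> dreal" where
  "dr_inv a = (1 / fst a, - snd a / (fst a)\<^sup>2)"

text \<open>Dual complex matrices A = A_s + A_d eps, represented as pairs (A_s, A_d)
  of complex matrices of the same dimension.\<close>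
type_synonym dcmat = "complex mat \<times> complex mat"

definition dcmat_carrier :: "nat \<Rightarrow> nat \<Rightarrow> dcmat set" where
  "dcmat_carrier m n = {A. fst A \<in> carrier_mat m n \<and> snd A \<in> carrier_mat m n}"

definition dc_mult :: "dcmat \<Rightarrow> dcmat \<Rightarrow> dcmat" where
  "dc_mult A B = (fst A * fst B, fst A * snd B + snd A * fst B)"

definition dc_minus :: "dcmat \<Rightarrow> dcmat \<Rightarrow> dcmat" where
  "dc_minus A B = (fst A - fst B, snd A - snd B)"

definition cadj :: "complex mat \<Rightarrow> complex mat" where
  "cadj M = mat (dim_col M) (dim_row M) (\<lambda>(i,j). cnj (M $$ (j,i)))"

definition dc_adj :: "dcmat \<Rightarrow> dcmat" where
  "dc_adj A = (cadj (fst A), cadj (snd A))"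

definition dc_id :: "nat \<Rightarrow> dcmat" where
  "dc_id n = (1\<^sub>m n, 0\<^sub>m n n)"

definition dc_unitary :: "nat \<Rightarrow> dcmat \<Rightarrow> bool" where
  "dc_unitary n U \<longleftrightarrow> U \<in> dcmat_carrier n n \<and>
     dc_mult (dc_adj U) U = dc_id n \<and> dc_mult U (dc_adj U) = dc_id n"

definition cfro :: "complex mat \<Rightarrow> real" where
  "cfro M = sqrt (\<Sum>i<dim_row M. \<Sum>j<dim_col M. (cmod (M $$ (i,j)))\<^sup>2)"

definition ctrace :: "complex mat \<Rightarrow> complex" where
  "ctrace M = (\<Sum>i<dim_row M. M $$ (i,i))"

definition dc_fro :: "dcmat \<Rightarrow> dreal" where
  "dc_fro A = (if fst A \<noteq> 0\<^sub>m (dim_row (fst A)) (dim_col (fst A))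
     then (cfro (fst A),
           Re (ctrace (cadj (fst A) * snd A + cadj (snd A) * fst A)) / (2 * cfro (fst A)))
     else (0, cfro (snd A)))"

definition dc_diag :: "nat \<Rightarrow> nat \<Rightarrow> nat \<Rightarrow> (nat \<Rightarrow> dreal) \<Rightarrow> dcmat" where
  "dc_diag m n k d =
    (mat m n (\<lambda>(i,j). if i = j \<and> i < k then complex_of_real (fst (d i)) else 0),
     mat m n (\<lambda>(i,j). if i = j \<and> i < k then complex_of_real (snd (d i)) else 0))"

end

theory Submission
  imports Defs
begin



lemma cadj_carrier[simp]: "A \<in> carrier_mat a b \<Longrightarrow> cadj A \<in> carrier_mat b a"
  by (simp add: cadj_def)
lemma cadj_dims[simp]: "dim_row (cadj A) = dim_col A" "dim_col (cadj A) = dim_row A"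
  by (simp_all add: cadj_def)
lemma cadj_index[simp]: "i < dim_col A \<Longrightarrow> j < dim_row A \<Longrightarrow> cadj A $$ (i,j) = cnj (A $$ (j,i))"
  by (simp add: cadj_def)

lemma cadj_mult: assumes "A \<in> carrier_mat a b" "B \<in> carrier_mat b c"
  shows "cadj (A * B) = cadj B * cadj A"
  using assms by (intro eq_matI) (auto simp: scalar_prod_def mult.commute)

lemma cadj_cadj[simp]: "cadj (cadj A) = A"
  by (intro eq_matI) auto

lemma cadj_add: assumes "A \<in> carrier_mat a b" "B \<in> carrier_mat a b"
  shows "cadj (A + B) = cadj A + cadj B"
  using assms by (intro eq_matI) auto

lemma cadj_uminus: "cadj (- A) = - cadj A"
  by (intro eq_matI) auto

lemma cadj_one[simp]: "cadj (1\<^sub>m a) = 1\<^sub>m a"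
  by (intro eq_matI) auto

lemma cadj_zero[simp]: "cadj (0\<^sub>m a b) = 0\<^sub>m b a"
  by (intro eq_matI) auto

definition cinner :: "complex mat \<Rightarrow> complex mat \<Rightarrow> complex" where
  "cinner A B = (\<Sum>i<dim_row A. \<Sum>j<dim_col A. cnj (A $$ (i,j)) * B $$ (i,j))"

lemma ctrace_cadj_mult: assumes "A \<in> carrier_mat a b" "B \<in> carrier_mat a b"
  shows "ctrace (cadj A * B) = cinner A B"
proof -
  have "ctrace (cadj A * B) = (\<Sum>j<b. \<Sum>i<a. cnj (A $$ (i,j)) * B $$ (i,j))"
    using assms by (simp add: ctrace_def scalar_prod_def sum.atLeast0_lessThan_Suc lessThan_atLeast0)
  also have "\<dots> = cinner A B" using assms unfolding cinner_def by (simp add: sum.swap[of _ "{..<b}"])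
  finally show ?thesis .
qed

lemma ctrace_add: assumes "A \<in> carrier_mat a a" "B \<in> carrier_mat a a"
  shows "ctrace (A + B) = ctrace A + ctrace B"
  using assms by (simp add: ctrace_def sum.distrib)

lemma ctrace_comm: assumes "A \<in> carrier_mat a b" "B \<in> carrier_mat b a"
  shows "ctrace (A * B) = ctrace (B * A)"
proof -
  have "ctrace (A * B) = (\<Sum>i<a. \<Sum>k<b. A $$ (i,k) * B $$ (k,i))"
    using assms by (simp add: ctrace_def scalar_prod_def lessThan_atLeast0)
  also have "\<dots> = (\<Sum>k<b. \<Sum>i<a. A $$ (i,k) * B $$ (k,i))"
    by (rule sum.swap)
  also have "\<dots> = (\<Sum>k<b. \<Sum>i<a. B $$ (k,i) * A $$ (i,k))"
    by (simp add: mult.commute)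
  also have "\<dots> = ctrace (B * A)"
    using assms by (simp add: ctrace_def scalar_prod_def lessThan_atLeast0)
  finally show ?thesis .
qed

lemma cinner_sym: assumes "A \<in> carrier_mat a b" "B \<in> carrier_mat a b"
  shows "cinner B A = cnj (cinner A B)"
  using assms by (simp add: cinner_def mult.commute)

lemma cinner_add: assumes "A \<in> carrier_mat a b" "B \<in> carrier_mat a b" "C \<in> carrier_mat a b"
  shows "cinner A (B + C) = cinner A B + cinner A C"
  using assms by (simp add: cinner_def sum.distrib distrib_left)

lemma dual_num: assumes "A \<in> carrier_mat a b" "B \<in> carrier_mat a b"
  shows "Re (ctrace (cadj A * B + cadj B * A)) = 2 * Re (cinner A B)"
proof -
  have "ctrace (cadj A * B + cadj B * A) = ctrace (cadj A * B) + ctrace (cadj B * A)"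
    using assms by (intro ctrace_add[of _ b]) auto
  also have "\<dots> = cinner A B + cnj (cinner A B)"
    using assms ctrace_cadj_mult[of A a b B] ctrace_cadj_mult[of B a b A] cinner_sym[of A a b B] by simp
  finally show ?thesis by simp
qed

definition sqsum :: "complex mat \<Rightarrow> real" where
  "sqsum M = (\<Sum>i<dim_row M. \<Sum>j<dim_col M. (cmod (M $$ (i,j)))\<^sup>2)"

lemma cfro_sqsum: "cfro M = sqrt (sqsum M)" by (simp add: cfro_def sqsum_def)

lemma sqsum_nonneg: "sqsum M \<ge> 0" by (simp add: sqsum_def sum_nonneg)

lemma sqsum_cinner: "sqsum M = Re (cinner M M)"
proof -
  have "\<And>z. (cmod z)\<^sup>2 = Re (cnj z * z)"
    by (simp add: cmod_def power2_eq_square)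
  then show ?thesis by (simp add: sqsum_def cinner_def)
qed

lemma sqsum_zero_iff: assumes "M \<in> carrier_mat a b"
  shows "sqsum M = 0 \<longleftrightarrow> M = 0\<^sub>m a b"
proof
  assume "sqsum M = 0"
  then have "\<forall>i<a. (\<Sum>j<b. (cmod (M $$ (i,j)))\<^sup>2) = 0"
    using assms by (simp add: sqsum_def sum_nonneg_eq_0_iff sum_nonneg)
  then have "\<forall>i<a. \<forall>j<b. M $$ (i,j) = 0"
    by (simp add: sum_nonneg_eq_0_iff)
  then show "M = 0\<^sub>m a b" using assms by (intro eq_matI) auto
next
  assume "M = 0\<^sub>m a b" then show "sqsum M = 0" by (simp add: sqsum_def)
qed

lemma cfro_pos: assumes "M \<in> carrier_mat a b" "M \<noteq> 0\<^sub>m a b" shows "cfro M > 0"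
  using sqsum_zero_iff[OF assms(1)] assms(2) sqsum_nonneg[of M]
  by (simp add: cfro_sqsum)




lemma ctrace_uminus: "A \<in> carrier_mat a a \<Longrightarrow> ctrace (- A) = - ctrace A"
  by (simp add: ctrace_def sum_negf)

lemma inv_left: assumes P: "P \<in> carrier_mat a a" and PP: "cadj P * P = 1\<^sub>m a"
  and M: "M \<in> carrier_mat a b" and N: "N \<in> carrier_mat a b"
  shows "cinner (P * M) (P * N) = cinner M N"
proof -
  have "cinner (P * M) (P * N) = ctrace (cadj (P * M) * (P * N))"
    using P M N by (simp add: ctrace_cadj_mult[of _ a b])
  also have "\<dots> = ctrace ((cadj M * cadj P) * (P * N))"
    using P M by (simp add: cadj_mult[of _ a a])
  also have "(cadj M * cadj P) * (P * N) = cadj M * (cadj P * (P * N))"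
    using P M N by (intro assoc_mult_mat[of _ b a _ a _ b]) auto
  also have "cadj P * (P * N) = (cadj P * P) * N"
    using P M N by (intro assoc_mult_mat[symmetric, of _ a a _ a _ b]) auto
  also have "(cadj P * P) * N = N" using PP N by simp
  also have "ctrace (cadj M * N) = cinner M N" using M N by (simp add: ctrace_cadj_mult)
  finally show ?thesis .
qed

lemma inv_right: assumes Q: "Q \<in> carrier_mat b b" and QQ: "cadj Q * Q = 1\<^sub>m b"
  and M: "M \<in> carrier_mat a b" and N: "N \<in> carrier_mat a b"
  shows "cinner (M * cadj Q) (N * cadj Q) = cinner M N"
proof -
  have "cinner (M * cadj Q) (N * cadj Q) = ctrace (cadj (M * cadj Q) * (N * cadj Q))"
    using Q M N by (simp add: ctrace_cadj_mult[of _ a b])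
  also have "cadj (M * cadj Q) = Q * cadj M"
    using Q M cadj_mult[of M a b "cadj Q" b] by simp
  also have "(Q * cadj M) * (N * cadj Q) = Q * (cadj M * (N * cadj Q))"
    using Q M N by (intro assoc_mult_mat[of _ b b _ a _ b]) auto
  also have "cadj M * (N * cadj Q) = (cadj M * N) * cadj Q"
    using Q M N by (intro assoc_mult_mat[symmetric, of _ b a _ b _ b]) auto
  also have "ctrace (Q * ((cadj M * N) * cadj Q)) = ctrace (((cadj M * N) * cadj Q) * Q)"
    using Q M N by (intro ctrace_comm[of _ b b]) auto
  also have "((cadj M * N) * cadj Q) * Q = (cadj M * N) * (cadj Q * Q)"
    using Q M N by (intro assoc_mult_mat[of _ b b _ b _ b]) auto
  also have "(cadj M * N) * (cadj Q * Q) = cadj M * N" using QQ M N by simp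
  also have "ctrace (cadj M * N) = cinner M N" using M N by (simp add: ctrace_cadj_mult)
  finally show ?thesis .
qed

lemma re_zero_lemma: "cnj z = - z \<Longrightarrow> Re z = 0"
  by (metis complex_add_cnj
      add.right_inverse of_real_eq_0_iff mult_eq_0_iff zero_neq_numeral)

lemma skew_left: assumes K: "K \<in> carrier_mat a a" and KK: "cadj K = - K"
  and M: "M \<in> carrier_mat a b"
  shows "Re (cinner M (K * M)) = 0"
proof (rule re_zero_lemma)
  have z: "cinner M (K * M) = ctrace (cadj M * (K * M))"
    using K M by (simp add: ctrace_cadj_mult[of _ a b])
  have "cnj (cinner M (K * M)) = cinner (K * M) M"
    using K M cinner_sym[of M a b "K * M"] by simp
  also have "\<dots> = ctrace (cadj (K * M) * M)"
    using K M by (simp add: ctrace_cadj_mult[of _ a b])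
  also have "cadj (K * M) = cadj M * (- K)"
    using K M KK by (simp add: cadj_mult[of _ a a])
  also have "cadj M * (- K) * M = - (cadj M * (K * M))"
    using K M by (simp add: assoc_mult_mat[of _ b a _ a _ b])
  also have "ctrace \<dots> = - ctrace (cadj M * (K * M))"
    using K M by (intro ctrace_uminus[of _ b]) auto
  finally show "cnj (cinner M (K * M)) = - cinner M (K * M)" using z by simp
qed

lemma skew_right: assumes L: "L \<in> carrier_mat b b" and LL: "cadj L = - L"
  and N: "N \<in> carrier_mat a b"
  shows "Re (cinner N (N * L)) = 0"
proof (rule re_zero_lemma)
  have z: "cinner N (N * L) = ctrace ((cadj N * N) * L)"
    using L N by (simp add: ctrace_cadj_mult[of _ a b] assoc_mult_mat[of _ b a _ b _ b])
  have "cnj (cinner N (N * L)) = cinner (N * L) N"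
    using L N cinner_sym[of N a b "N * L"] by simp
  also have "\<dots> = ctrace (cadj (N * L) * N)"
    using L N by (simp add: ctrace_cadj_mult[of _ a b])
  also have "cadj (N * L) = (- L) * cadj N"
    using L N LL by (simp add: cadj_mult[of _ a b])
  also have "(- L) * cadj N * N = - (L * (cadj N * N))"
    using L N by (simp add: assoc_mult_mat[of _ b b _ a _ b])
  also have "ctrace \<dots> = - ctrace (L * (cadj N * N))"
    using L N by (intro ctrace_uminus[of _ b]) auto
  also have "ctrace (L * (cadj N * N)) = ctrace ((cadj N * N) * L)"
    using L N by (intro ctrace_comm[of _ b b]) auto
  finally show "cnj (cinner N (N * L)) = - cinner N (N * L)" using z by simp
qed




lemma dcc: "A \<in> dcmat_carrier a b \<longleftrightarrow> fst A \<in> carrier_mat a b \<and> snd A \<in> carrier_mat a b"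
  by (simp add: dcmat_carrier_def)

lemma dc_mult_carrier: "A \<in> dcmat_carrier a b \<Longrightarrow> B \<in> dcmat_carrier b c \<Longrightarrow> dc_mult A B \<in> dcmat_carrier a c"
  by (auto simp: dcc dc_mult_def)

lemma dc_adj_carrier: "A \<in> dcmat_carrier a b \<Longrightarrow> dc_adj A \<in> dcmat_carrier b a"
  by (auto simp: dcc dc_adj_def)

lemma dc_minus_carrier: "A \<in> dcmat_carrier a b \<Longrightarrow> B \<in> dcmat_carrier a b \<Longrightarrow> dc_minus A B \<in> dcmat_carrier a b"
  by (auto simp: dcc dc_minus_def)

lemma dc_mult_assoc: assumes "A \<in> dcmat_carrier a b" "B \<in> dcmat_carrier b c" "C \<in> dcmat_carrier c d"
  shows "dc_mult (dc_mult A B) C = dc_mult A (dc_mult B C)"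
proof -
  obtain As Ad where A: "A = (As, Ad)" "As \<in> carrier_mat a b" "Ad \<in> carrier_mat a b"
    using assms(1) by (cases A) (auto simp: dcc)
  obtain Bs Bd where B: "B = (Bs, Bd)" "Bs \<in> carrier_mat b c" "Bd \<in> carrier_mat b c"
    using assms(2) by (cases B) (auto simp: dcc)
  obtain Cs Cd where C: "C = (Cs, Cd)" "Cs \<in> carrier_mat c d" "Cd \<in> carrier_mat c d"
    using assms(3) by (cases C) (auto simp: dcc)
  have 1: "(As * Bs) * Cs = As * (Bs * Cs)" using A B C by simp
  have "(As * Bs) * Cd + (As * Bd + Ad * Bs) * Cs = As * (Bs * Cd) + (As * (Bd * Cs) + Ad * (Bs * Cs))"
    using A B C add_mult_distrib_mat[of "As * Bd" a c "Ad * Bs" Cs d] by simp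
  also have "\<dots> = (As * (Bs * Cd) + As * (Bd * Cs)) + Ad * (Bs * Cs)"
    using A B C by (intro assoc_add_mat[symmetric, of _ a d]) auto
  also have "\<dots> = As * (Bs * Cd + Bd * Cs) + Ad * (Bs * Cs)"
    using A B C mult_add_distrib_mat[of As a b "Bs * Cd" d "Bd * Cs"] by simp
  finally show ?thesis using 1 A B C by (simp add: dc_mult_def)
qed

lemma dc_mult_id_left: "A \<in> dcmat_carrier a b \<Longrightarrow> dc_mult (dc_id a) A = A"
  by (cases A) (auto simp: dcc dc_mult_def dc_id_def)

lemma dc_mult_id_right: "A \<in> dcmat_carrier a b \<Longrightarrow> dc_mult A (dc_id b) = A"
  by (cases A) (auto simp: dcc dc_mult_def dc_id_def)

lemma dc_mult_minus_left: assumes "P \<in> dcmat_carrier a b" "B \<in> dcmat_carrier b c" "C \<in> dcmat_carrier b c"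
  shows "dc_mult P (dc_minus B C) = dc_minus (dc_mult P B) (dc_mult P C)"
proof -
  obtain Ps Pd where P: "P = (Ps, Pd)" "Ps \<in> carrier_mat a b" "Pd \<in> carrier_mat a b"
    using assms(1) by (cases P) (auto simp: dcc)
  obtain Bs Bd where B: "B = (Bs, Bd)" "Bs \<in> carrier_mat b c" "Bd \<in> carrier_mat b c"
    using assms(2) by (cases B) (auto simp: dcc)
  obtain Cs Cd where C: "C = (Cs, Cd)" "Cs \<in> carrier_mat b c" "Cd \<in> carrier_mat b c"
    using assms(3) by (cases C) (auto simp: dcc)
  have 1: "Ps * (Bs - Cs) = Ps * Bs - Ps * Cs" using P B C by (simp add: mult_minus_distrib_mat[of _ a b])
  have 2: "Ps * (Bd - Cd) + Pd * (Bs - Cs) = (Ps * Bd + Pd * Bs) - (Ps * Cd + Pd * Cs)"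
    using P B C by (intro eq_matI) (auto simp: mult_minus_distrib_mat[of _ a b])
  show ?thesis using 1 2 P B C by (simp add: dc_mult_def dc_minus_def)
qed

lemma dc_mult_minus_right: assumes "B \<in> dcmat_carrier a b" "C \<in> dcmat_carrier a b" "Q \<in> dcmat_carrier b c"
  shows "dc_mult (dc_minus B C) Q = dc_minus (dc_mult B Q) (dc_mult C Q)"
proof -
  obtain Qs Qd where Q: "Q = (Qs, Qd)" "Qs \<in> carrier_mat b c" "Qd \<in> carrier_mat b c"
    using assms(3) by (cases Q) (auto simp: dcc)
  obtain Bs Bd where B: "B = (Bs, Bd)" "Bs \<in> carrier_mat a b" "Bd \<in> carrier_mat a b"
    using assms(1) by (cases B) (auto simp: dcc)
  obtain Cs Cd where C: "C = (Cs, Cd)" "Cs \<in> carrier_mat a b" "Cd \<in> carrier_mat a b"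
    using assms(2) by (cases C) (auto simp: dcc)
  have 1: "(Bs - Cs) * Qs = Bs * Qs - Cs * Qs" using Q B C by (simp add: minus_mult_distrib_mat[of _ a b])
  have 2: "(Bs - Cs) * Qd + (Bd - Cd) * Qs = (Bs * Qd + Bd * Qs) - (Cs * Qd + Cd * Qs)"
    using Q B C by (intro eq_matI) (auto simp: minus_mult_distrib_mat[of _ a b])
  show ?thesis using 1 2 Q B C by (simp add: dc_mult_def dc_minus_def)
qed




lemma unitary_parts: assumes "dc_unitary a P"
  shows "fst P \<in> carrier_mat a a" "snd P \<in> carrier_mat a a"
    "cadj (fst P) * fst P = 1\<^sub>m a" "fst P * cadj (fst P) = 1\<^sub>m a"
    "cadj (fst P) * snd P + cadj (snd P) * fst P = 0\<^sub>m a a"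
    "fst P * cadj (snd P) + snd P * cadj (fst P) = 0\<^sub>m a a"
  using assms by (auto simp: dc_unitary_def dcc dc_mult_def dc_adj_def dc_id_def)

lemma add_zero_neg: fixes X Y :: "complex mat" assumes "X \<in> carrier_mat a b" "Y \<in> carrier_mat a b" "X + Y = 0\<^sub>m a b"
  shows "Y = - X" "X = - Y"
proof -
  have e: "\<And>i j. i < a \<Longrightarrow> j < b \<Longrightarrow> X $$ (i,j) + Y $$ (i,j) = 0"
  proof -
    fix i j assume "i < a" "j < b"
    then have "(X + Y) $$ (i,j) = 0\<^sub>m a b $$ (i,j)" by (simp only: assms(3))
    then show "X $$ (i,j) + Y $$ (i,j) = 0" using assms(1,2) \<open>i < a\<close> \<open>j < b\<close> by simp
  qed
  have e2: "\<And>i j. i < a \<Longrightarrow> j < b \<Longrightarrow> Y $$ (i,j) = - X $$ (i,j)"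
  proof -
    fix i j assume "i < a" "j < b"
    then have "X $$ (i,j) + Y $$ (i,j) = 0" by (rule e)
    have "Y $$ (i,j) = (X $$ (i,j) + Y $$ (i,j)) - X $$ (i,j)" by simp
    also have "\<dots> = - X $$ (i,j)" using \<open>X $$ (i,j) + Y $$ (i,j) = 0\<close> by simp
    finally show "Y $$ (i,j) = - X $$ (i,j)" .
  qed
  have e3: "\<And>i j. i < a \<Longrightarrow> j < b \<Longrightarrow> X $$ (i,j) = - Y $$ (i,j)"
    using e2 by simp
  show "Y = - X" using assms(1,2) e2 by (intro eq_matI) auto
  show "X = - Y" using assms(1,2) e3 by (intro eq_matI) auto
qed

lemma dc_fro_inv: assumes P: "dc_unitary a P" and Q: "dc_unitary b Q" and M: "M \<in> dcmat_carrier a b"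
  shows "dc_fro (dc_mult (dc_mult P M) (dc_adj Q)) = dc_fro M"
proof -
  obtain Ps Pd where Pe: "P = (Ps, Pd)" by (cases P)
  obtain Qs Qd where Qe: "Q = (Qs, Qd)" by (cases Q)
  obtain Ms Md where Me: "M = (Ms, Md)" by (cases M)
  note PP = unitary_parts[OF P, unfolded Pe fst_conv snd_conv]
  note QQ = unitary_parts[OF Q, unfolded Qe fst_conv snd_conv]
  have Ms: "Ms \<in> carrier_mat a b" and Md: "Md \<in> carrier_mat a b" using M Me by (auto simp: dcc)
  define Ws where "Ws = Ps * (Ms * cadj Qs)"
  define T1 where "T1 = Ps * (Ms * cadj Qd)"
  define T2 where "T2 = Ps * (Md * cadj Qs)"
  define T3 where "T3 = Pd * (Ms * cadj Qs)"
  have Wdef: "dc_mult (dc_mult P M) (dc_adj Q) = (Ws, T1 + (T2 + T3))"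
  proof -
    have "Ps * Ms * cadj Qs = Ws" unfolding Ws_def using PP QQ Ms by (intro assoc_mult_mat[of _ a a _ b _ b]) auto
    moreover have "Ps * Ms * cadj Qd = T1" unfolding T1_def using PP QQ Ms by (intro assoc_mult_mat[of _ a a _ b _ b]) auto
    moreover have "(Ps * Md + Pd * Ms) * cadj Qs = T2 + T3"
    proof -
      have "(Ps * Md + Pd * Ms) * cadj Qs = Ps * Md * cadj Qs + Pd * Ms * cadj Qs"
        using PP QQ Ms Md by (intro add_mult_distrib_mat[of _ a b]) auto
      also have "\<dots> = T2 + T3" unfolding T2_def T3_def using PP QQ Ms Md
          assoc_mult_mat[of Ps a a Md b "cadj Qs" b] assoc_mult_mat[of Pd a a Ms b "cadj Qs" b] by simp
      finally show ?thesis .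
    qed
    ultimately show ?thesis by (simp add: Pe Qe Me dc_mult_def dc_adj_def)
  qed
  have MQ: "Ms * cadj Qs \<in> carrier_mat a b" using Ms QQ by auto
  have MQd: "Ms * cadj Qd \<in> carrier_mat a b" using Ms QQ by auto
  have MdQ: "Md * cadj Qs \<in> carrier_mat a b" using Md QQ by auto
  have Wc: "Ws \<in> carrier_mat a b" "T1 \<in> carrier_mat a b" "T2 \<in> carrier_mat a b" "T3 \<in> carrier_mat a b"
    unfolding Ws_def T1_def T2_def T3_def using PP MQ MQd MdQ by auto
  have sq: "sqsum Ws = sqsum Ms"
    unfolding sqsum_cinner Ws_def
    using inv_left[OF PP(1) PP(3) MQ MQ] inv_right[OF QQ(1) QQ(3) Ms Ms] by simp
  have Wz: "Ws = 0\<^sub>m a b \<longleftrightarrow> Ms = 0\<^sub>m a b"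
    using sqsum_zero_iff[OF Wc(1)] sqsum_zero_iff[OF Ms] sq by simp
  have c1: "Re (cinner Ws T1) = 0"
  proof -
    have "cinner Ws T1 = cinner (Ms * cadj Qs) (Ms * cadj Qd)"
      unfolding Ws_def T1_def using inv_left[OF PP(1) PP(3) MQ MQd] .
    also have "Ms * cadj Qd = (Ms * cadj Qs) * (Qs * cadj Qd)"
    proof -
      have "(Ms * cadj Qs) * (Qs * cadj Qd) = Ms * (cadj Qs * (Qs * cadj Qd))"
        using Ms QQ by (intro assoc_mult_mat[of _ a b _ b _ b]) auto
      also have "cadj Qs * (Qs * cadj Qd) = (cadj Qs * Qs) * cadj Qd"
        using QQ by (intro assoc_mult_mat[symmetric, of _ b b _ b _ b]) auto
      finally show ?thesis using QQ Ms by simp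
    qed
    finally have e: "cinner Ws T1 = cinner (Ms * cadj Qs) ((Ms * cadj Qs) * (Qs * cadj Qd))" .
    have L: "Qs * cadj Qd \<in> carrier_mat b b" using QQ by auto
    have "cadj (Qs * cadj Qd) = Qd * cadj Qs" using QQ cadj_mult[of Qs b b "cadj Qd" b] by simp
    also have "\<dots> = - (Qs * cadj Qd)"
    proof -
      have "Qs * cadj Qd + Qd * cadj Qs = 0\<^sub>m b b" by (rule QQ(6))
      then show ?thesis using QQ
        using add_zero_neg(1)[of "Qs * cadj Qd" b b "Qd * cadj Qs"] by auto
    qed
    finally have LL: "cadj (Qs * cadj Qd) = - (Qs * cadj Qd)" .
    show ?thesis using e skew_right[OF L LL MQ] by simp
  qed
  have c2: "cinner Ws T2 = cinner Ms Md"
    unfolding Ws_def T2_def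
    using inv_left[OF PP(1) PP(3) MQ MdQ] inv_right[OF QQ(1) QQ(3) Ms Md] by simp
  have c3: "Re (cinner Ws T3) = 0"
  proof -
    have "T3 = Ps * ((cadj Ps * Pd) * (Ms * cadj Qs))"
    proof -
      have "Ps * ((cadj Ps * Pd) * (Ms * cadj Qs)) = Ps * (cadj Ps * (Pd * (Ms * cadj Qs)))"
        using PP MQ by (simp add: assoc_mult_mat[of _ a a _ a _ b])
      also have "\<dots> = (Ps * cadj Ps) * (Pd * (Ms * cadj Qs))"
        using PP MQ by (intro assoc_mult_mat[symmetric, of _ a a _ a _ b]) auto
      finally show ?thesis unfolding T3_def using PP MQ by simp
    qed
    moreover have "(cadj Ps * Pd) * (Ms * cadj Qs) \<in> carrier_mat a b"
      by (rule mult_carrier_mat[OF mult_carrier_mat[OF cadj_carrier[OF PP(1)] PP(2)] MQ])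
    ultimately have e: "cinner Ws T3 = cinner (Ms * cadj Qs) ((cadj Ps * Pd) * (Ms * cadj Qs))"
      unfolding Ws_def using inv_left[OF PP(1) PP(3) MQ, of "(cadj Ps * Pd) * (Ms * cadj Qs)"] PP MQ by simp
    have K: "cadj Ps * Pd \<in> carrier_mat a a" using PP by auto
    have "cadj (cadj Ps * Pd) = cadj Pd * Ps" using PP cadj_mult[of "cadj Ps" a a Pd a] by simp
    also have "\<dots> = - (cadj Ps * Pd)"
    proof -
      have "cadj Ps * Pd + cadj Pd * Ps = 0\<^sub>m a a" by (rule PP(5))
      then show ?thesis using PP
        using add_zero_neg(1)[OF mult_carrier_mat[OF cadj_carrier[OF PP(1)] PP(2)] mult_carrier_mat[OF cadj_carrier[OF PP(2)] PP(1)] PP(5)] by blast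
    qed
    finally have KK: "cadj (cadj Ps * Pd) = - (cadj Ps * Pd)" .
    show ?thesis using e skew_left[OF K KK MQ] by simp
  qed
  have num: "Re (ctrace (cadj Ws * (T1 + (T2 + T3)) + cadj (T1 + (T2 + T3)) * Ws))
        = Re (ctrace (cadj Ms * Md + cadj Md * Ms))"
  proof -
    have "Re (ctrace (cadj Ws * (T1 + (T2 + T3)) + cadj (T1 + (T2 + T3)) * Ws)) = 2 * Re (cinner Ws (T1 + (T2 + T3)))"
      using Wc by (intro dual_num[of _ a b]) auto
    also have "cinner Ws (T1 + (T2 + T3)) = cinner Ws T1 + (cinner Ws T2 + cinner Ws T3)"
      using Wc by (simp add: cinner_add[of _ a b])
    also have "2 * Re \<dots> = 2 * Re (cinner Ms Md)" using c1 c2 c3 by simp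
    also have "\<dots> = Re (ctrace (cadj Ms * Md + cadj Md * Ms))"
      using Ms Md by (intro dual_num[symmetric, of _ a b]) auto
    finally show ?thesis .
  qed
  show ?thesis
  proof (cases "Ms = 0\<^sub>m a b")
    case True
    then have Wz': "Ws = 0\<^sub>m a b" using Wz by simp
    have "T1 = 0\<^sub>m a b" "T3 = 0\<^sub>m a b" unfolding T1_def T3_def using True PP QQ by auto
    then have "T1 + (T2 + T3) = T2" using Wc by simp
    moreover have "sqsum T2 = sqsum Md"
      unfolding sqsum_cinner T2_def
      using inv_left[OF PP(1) PP(3) MdQ MdQ] inv_right[OF QQ(1) QQ(3) Md Md] by simp
    ultimately show ?thesis using True Wz' Wdef Me Ms Wc by (simp add: dc_fro_def cfro_sqsum)
  next
    case False
    then have "Ws \<noteq> 0\<^sub>m a b" using Wz by simp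
    then show ?thesis using False Wdef Me Ms Wc num sq by (simp add: dc_fro_def cfro_sqsum)
  qed
qed




lemma diag_mult_left:
  fixes f :: "nat \<Rightarrow> complex"
  assumes "k \<le> a" "k \<le> b" "B \<in> carrier_mat b c" "i < a" "j < c"
  shows "(mat a b (\<lambda>(i,j). if i = j \<and> i < k then f i else 0) * B) $$ (i,j) = (if i < k then f i * B $$ (i,j) else 0)"
proof -
  have "(mat a b (\<lambda>(i,j). if i = j \<and> i < k then f i else 0) * B) $$ (i,j)
      = (\<Sum>l<b. (if i = l \<and> i < k then f i else 0) * B $$ (l,j))"
    using assms by (simp add: scalar_prod_def lessThan_atLeast0)
  also have "\<dots> = (\<Sum>l<b. if l = i then (if i < k then f i * B $$ (i,j) else 0) else 0)"
    by (rule sum.cong) auto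
  also have "\<dots> = (if i < k then f i * B $$ (i,j) else 0)"
    using assms by (simp add: sum.delta)
  finally show ?thesis .
qed

lemma diag_mult_right:
  fixes f :: "nat \<Rightarrow> complex"
  assumes "k \<le> a" "k \<le> b" "B \<in> carrier_mat c a" "i < c" "j < b"
  shows "(B * mat a b (\<lambda>(i,j). if i = j \<and> i < k then f i else 0)) $$ (i,j) = (if j < k then B $$ (i,j) * f j else 0)"
proof -
  have "(B * mat a b (\<lambda>(i,j). if i = j \<and> i < k then f i else 0)) $$ (i,j)
      = (\<Sum>l<a. B $$ (i,l) * (if l = j \<and> l < k then f l else 0))"
    using assms by (simp add: scalar_prod_def lessThan_atLeast0)
  also have "\<dots> = (\<Sum>l<a. if l = j then (if j < k then B $$ (i,j) * f j else 0) else 0)"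
    by (rule sum.cong) auto
  also have "\<dots> = (if j < k then B $$ (i,j) * f j else 0)"
    using assms by (simp add: sum.delta)
  finally show ?thesis .
qed

definition ss :: "(nat \<Rightarrow> dreal) \<Rightarrow> nat \<Rightarrow> complex" where "ss mu i = complex_of_real (fst (mu i))"
definition dd :: "(nat \<Rightarrow> dreal) \<Rightarrow> nat \<Rightarrow> complex" where "dd mu i = complex_of_real (snd (mu i))"

lemma E_entries:
  fixes Y :: dcmat and mu :: "nat \<Rightarrow> dreal" and m n t i j :: nat
  assumes tmn: "t \<le> min m n" and Y: "Y \<in> dcmat_carrier n m" and i: "i < m" and j: "j < n"
  defines "S \<equiv> dc_diag m n t mu"
  defines "E \<equiv> dc_minus (dc_mult (dc_mult S Y) S) S"
  shows "fst E $$ (i,j) = (if i < t \<and> j < t then ss mu i * fst Y $$ (i,j) * ss mu j else 0)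
                         - (if i = j \<and> i < t then ss mu i else 0)"
    "snd E $$ (i,j) = (if i < t \<and> j < t then ss mu i * fst Y $$ (i,j) * dd mu j
                           + ss mu i * snd Y $$ (i,j) * ss mu j + dd mu i * fst Y $$ (i,j) * ss mu j else 0)
                         - (if i = j \<and> i < t then dd mu i else 0)"
proof -
  obtain Ys Yd where Ye: "Y = (Ys, Yd)" "Ys \<in> carrier_mat n m" "Yd \<in> carrier_mat n m"
    using Y by (cases Y) (auto simp: dcc)
  define Ss where "Ss = mat m n (\<lambda>(i,j). if i = j \<and> i < t then ss mu i else 0)"
  define Sd where "Sd = mat m n (\<lambda>(i,j). if i = j \<and> i < t then dd mu i else 0)"
  have Se: "S = (Ss, Sd)" unfolding S_def Ss_def Sd_def dc_diag_def ss_def dd_def by simp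
  have c: "Ss \<in> carrier_mat m n" "Sd \<in> carrier_mat m n" unfolding Ss_def Sd_def by auto
  have tm: "t \<le> m" "t \<le> n" using tmn by auto
  have SsY: "\<And>i j. i < m \<Longrightarrow> j < m \<Longrightarrow> (Ss * Ys) $$ (i,j) = (if i < t then ss mu i * Ys $$ (i,j) else 0)"
    unfolding Ss_def using tm Ye by (intro diag_mult_left) auto
  have SsYd: "\<And>i j. i < m \<Longrightarrow> j < m \<Longrightarrow> (Ss * Yd) $$ (i,j) = (if i < t then ss mu i * Yd $$ (i,j) else 0)"
    unfolding Ss_def using tm Ye by (intro diag_mult_left) auto
  have SdY: "\<And>i j. i < m \<Longrightarrow> j < m \<Longrightarrow> (Sd * Ys) $$ (i,j) = (if i < t then dd mu i * Ys $$ (i,j) else 0)"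
    unfolding Sd_def using tm Ye by (intro diag_mult_left) auto
  have c2: "Ss * Ys \<in> carrier_mat m m" "Ss * Yd \<in> carrier_mat m m" "Sd * Ys \<in> carrier_mat m m"
    using c Ye by auto
  have XSs: "\<And>X i j. X \<in> carrier_mat m m \<Longrightarrow> i < m \<Longrightarrow> j < n \<Longrightarrow> (X * Ss) $$ (i,j) = (if j < t then X $$ (i,j) * ss mu j else 0)"
    unfolding Ss_def using tm by (intro diag_mult_right) auto
  have XSd: "\<And>X i j. X \<in> carrier_mat m m \<Longrightarrow> i < m \<Longrightarrow> j < n \<Longrightarrow> (X * Sd) $$ (i,j) = (if j < t then X $$ (i,j) * dd mu j else 0)"
    unfolding Sd_def using tm by (intro diag_mult_right) auto
  have Ssi: "Ss $$ (i,j) = (if i = j \<and> i < t then ss mu i else 0)" "Sd $$ (i,j) = (if i = j \<and> i < t then dd mu i else 0)"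
    unfolding Ss_def Sd_def using i j by auto
  have dims: "dim_row Ss = m" "dim_col Ss = n" "dim_row Sd = m" "dim_col Sd = n" using c by auto
  have Ee: "E = (Ss * Ys * Ss - Ss, (Ss * Ys * Sd + (Ss * Yd + Sd * Ys) * Ss) - Sd)"
    unfolding E_def Se Ye by (simp add: dc_mult_def dc_minus_def)
  show "fst E $$ (i,j) = (if i < t \<and> j < t then ss mu i * fst Y $$ (i,j) * ss mu j else 0)
                         - (if i = j \<and> i < t then ss mu i else 0)"
  proof -
    have "fst E $$ (i,j) = (Ss * Ys * Ss) $$ (i,j) - Ss $$ (i,j)"
      unfolding Ee using i j c c2 by simp
    also have "\<dots> = (if j < t then (Ss * Ys) $$ (i,j) * ss mu j else 0) - Ss $$ (i,j)"
      using XSs[OF c2(1) i j] by simp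
    also have "\<dots> = (if j < t then (if i < t then ss mu i * Ys $$ (i,j) else 0) * ss mu j else 0) - Ss $$ (i,j)"
      using i j tm c2 by (simp add: SsY)
    finally show ?thesis unfolding Ssi(1) Ye fst_conv snd_conv
      by (cases "i < t"; cases "j < t") simp_all
  qed
  show "snd E $$ (i,j) = (if i < t \<and> j < t then ss mu i * fst Y $$ (i,j) * dd mu j
                           + ss mu i * snd Y $$ (i,j) * ss mu j + dd mu i * fst Y $$ (i,j) * ss mu j else 0)
                         - (if i = j \<and> i < t then dd mu i else 0)"
  proof -
    have a1: "(Ss * Yd + Sd * Ys) \<in> carrier_mat m m" using c2 by auto
    have "snd E $$ (i,j) = (Ss * Ys * Sd) $$ (i,j) + ((Ss * Yd + Sd * Ys) * Ss) $$ (i,j) - Sd $$ (i,j)"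
      unfolding Ee using i j c c2 a1 by simp
    also have "\<dots> = (if j < t then (Ss * Ys) $$ (i,j) * dd mu j else 0)
        + (if j < t then (Ss * Yd + Sd * Ys) $$ (i,j) * ss mu j else 0) - Sd $$ (i,j)"
      using XSd[OF c2(1) i j] XSs[OF a1 i j] by simp
    also have "\<dots> = (if j < t then (if i < t then ss mu i * Ys $$ (i,j) else 0) * dd mu j else 0)
        + (if j < t then ((if i < t then ss mu i * Yd $$ (i,j) else 0) + (if i < t then dd mu i * Ys $$ (i,j) else 0)) * ss mu j else 0) - Sd $$ (i,j)"
    proof (cases "j < t")
      case True
      then have jm: "j < m" using tm by simp
      have "(Ss * Yd + Sd * Ys) $$ (i,j) = (Ss * Yd) $$ (i,j) + (Sd * Ys) $$ (i,j)"
        by (rule index_add_mat(1)) (use c Ye i jm in auto)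
      then show ?thesis using True i jm SsY[OF i jm] SsYd[OF i jm] SdY[OF i jm] by simp
    qed simp
    finally show ?thesis unfolding Ssi(2) Ye fst_conv snd_conv
      by (cases "i < t"; cases "j < t") (simp_all add: distrib_right)
  qed
qed




definition offs :: "complex mat \<Rightarrow> nat set \<Rightarrow> real" where
  "offs M I = (\<Sum>i<dim_row M. \<Sum>j<dim_col M. if i = j \<and> i \<in> I then 0 else (cmod (M $$ (i,j)))\<^sup>2)"

lemma offs_nonneg: "offs M I \<ge> 0" by (simp add: offs_def sum_nonneg)

lemma offs_zero: assumes "offs M I = 0" "i < dim_row M" "j < dim_col M" "\<not> (i = j \<and> i \<in> I)"
  shows "M $$ (i,j) = 0"
proof -
  have "\<forall>i<dim_row M. (\<Sum>j<dim_col M. if i = j \<and> i \<in> I then 0 else (cmod (M $$ (i,j)))\<^sup>2) = 0"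
    using assms(1) unfolding offs_def by (subst (asm) sum_nonneg_eq_0_iff) (auto intro: sum_nonneg)
  then have "\<forall>i<dim_row M. \<forall>j<dim_col M. (if i = j \<and> i \<in> I then 0 else (cmod (M $$ (i,j)))\<^sup>2) = 0"
    by (subst (asm) sum_nonneg_eq_0_iff) auto
  then have "(if i = j \<and> i \<in> I then 0 else (cmod (M $$ (i,j)))\<^sup>2) = 0" using assms(2,3) by blast
  then show ?thesis using assms(4) by simp
qed

lemma sqsum_split: assumes "\<And>i. i \<in> I \<Longrightarrow> i < dim_row M \<and> i < dim_col M"
  shows "sqsum M = (\<Sum>i\<in>I. (cmod (M $$ (i,i)))\<^sup>2) + offs M I"
proof -
  have fin: "finite I"
    by (rule finite_subset[of _ "{..<dim_row M}"]) (use assms in auto)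
  have "sqsum M = (\<Sum>i<dim_row M. \<Sum>j<dim_col M. (if i = j \<and> i \<in> I then (cmod (M $$ (i,j)))\<^sup>2 else 0)
      + (if i = j \<and> i \<in> I then 0 else (cmod (M $$ (i,j)))\<^sup>2))"
    unfolding sqsum_def by (intro sum.cong refl) auto
  also have "\<dots> = (\<Sum>i<dim_row M. \<Sum>j<dim_col M. (if i = j \<and> i \<in> I then (cmod (M $$ (i,j)))\<^sup>2 else 0)) + offs M I"
    unfolding offs_def by (simp add: sum.distrib)
  also have "(\<Sum>i<dim_row M. \<Sum>j<dim_col M. (if i = j \<and> i \<in> I then (cmod (M $$ (i,j)))\<^sup>2 else 0))
      = (\<Sum>i<dim_row M. if i \<in> I then (cmod (M $$ (i,i)))\<^sup>2 else 0)"
  proof (intro sum.cong refl)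
    fix i assume "i \<in> {..<dim_row M}"
    have "(\<Sum>j<dim_col M. (if i = j \<and> i \<in> I then (cmod (M $$ (i,j)))\<^sup>2 else 0))
        = (\<Sum>j<dim_col M. (if j = i then (if i \<in> I then (cmod (M $$ (i,i)))\<^sup>2 else 0) else 0))"
      by (intro sum.cong refl) auto
    also have "\<dots> = (if i \<in> I then (cmod (M $$ (i,i)))\<^sup>2 else 0)"
      using assms by (auto simp: sum.delta)
    finally show "(\<Sum>j<dim_col M. (if i = j \<and> i \<in> I then (cmod (M $$ (i,j)))\<^sup>2 else 0))
        = (if i \<in> I then (cmod (M $$ (i,i)))\<^sup>2 else 0)" .
  qed
  also have "\<dots> = (\<Sum>i\<in>I. (cmod (M $$ (i,i)))\<^sup>2)"
  proof -
    have "I \<subseteq> {..<dim_row M}" using assms by auto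
    then have "{..<dim_row M} \<inter> I = I" by auto
    then show ?thesis by (simp add: sum.inter_restrict[symmetric])
  qed
  finally show ?thesis .
qed

lemma dc_fro_nonneg: "dr_le (0,0) (dc_fro M)"
proof (cases "fst M \<noteq> 0\<^sub>m (dim_row (fst M)) (dim_col (fst M))")
  case True
  have "cfro (fst M) > 0" using cfro_pos[of "fst M" "dim_row (fst M)" "dim_col (fst M)"] True by auto
  then show ?thesis using True by (simp add: dc_fro_def dr_le_def)
next
  case False
  then show ?thesis by (simp add: dc_fro_def dr_le_def cfro_def sum_nonneg)
qed




lemma offs_diag: assumes "\<And>i j. i < dim_row M \<Longrightarrow> j < dim_col M \<Longrightarrow> \<not> (i = j \<and> i \<in> I) \<Longrightarrow> M $$ (i,j) = 0"
  shows "offs M I = 0"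
  unfolding offs_def using assms by (intro sum.neutral ballI) auto

lemma S_carrier: "dc_diag a b k f \<in> dcmat_carrier a b"
  by (simp add: dc_diag_def dcc)

context
  fixes m n r t :: nat and mu :: "nat \<Rightarrow> dreal"
  assumes rt: "r \<le> t" and tmn: "t \<le> min m n"
    and app: "\<And>i. i < r \<Longrightarrow> fst (mu i) > 0"
    and inf: "\<And>i. r \<le> i \<Longrightarrow> i < t \<Longrightarrow> fst (mu i) = 0 \<and> snd (mu i) > 0"
begin

abbreviation "Gm \<equiv> dc_diag n m r (\<lambda>i. dr_inv (mu i))"
abbreviation "Em Y \<equiv> dc_minus (dc_mult (dc_mult (dc_diag m n t mu) Y) (dc_diag m n t mu)) (dc_diag m n t mu)"

lemma ss_nz: "i < r \<Longrightarrow> ss mu i \<noteq> 0"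
  using app[of i] by (simp add: ss_def)

lemma ss_z: "r \<le> i \<Longrightarrow> i < t \<Longrightarrow> ss mu i = 0"
  using inf[of i] by (simp add: ss_def)

lemma G_carrier: "Gm \<in> dcmat_carrier n m" by (rule S_carrier)

lemma G_entries: assumes "i < n" "j < m"
  shows "fst Gm $$ (i,j) = (if i = j \<and> i < r then 1 / ss mu i else 0)"
    "snd Gm $$ (i,j) = (if i = j \<and> i < r then - dd mu i / (ss mu i)\<^sup>2 else 0)"
  using assms by (auto simp: dc_diag_def dr_inv_def ss_def dd_def)

lemma E_carrier: "Y \<in> dcmat_carrier n m \<Longrightarrow> Em Y \<in> dcmat_carrier m n"
  by (rule dc_minus_carrier[OF dc_mult_carrier[OF dc_mult_carrier[OF S_carrier] S_carrier] S_carrier])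

lemma EG_fst: "fst (Em Gm) = 0\<^sub>m m n"
proof -
  have c: "fst (Em Gm) \<in> carrier_mat m n" using E_carrier[OF G_carrier] by (simp add: dcc)
  show ?thesis
  proof (rule eq_matI)
    fix i j assume ij: "i < dim_row (0\<^sub>m m n)" "j < dim_col (0\<^sub>m m n)"
    then have i: "i < m" and j: "j < n" by auto
    show "fst (Em Gm) $$ (i,j) = 0\<^sub>m m n $$ (i,j)"
    proof (cases "i < t \<and> j < t")
      case True
      then have "i < n" "j < m" using tmn by auto
      then show ?thesis using E_entries(1)[where mu=mu, OF tmn G_carrier i j] True i j G_entries(1)[of i j] ss_nz[of i] ss_z[of i]
        by (cases "i < r") auto
    next
      case False
      then show ?thesis using E_entries(1)[where mu=mu, OF tmn G_carrier i j] i j by auto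
    qed
  qed (use c in auto)
qed

lemma EG_snd: "snd (Em Gm) = mat m n (\<lambda>(i,j). if i = j \<and> r \<le> i \<and> i < t then - dd mu i else 0)"
proof -
  have c: "snd (Em Gm) \<in> carrier_mat m n" using E_carrier[OF G_carrier] by (simp add: dcc)
  show ?thesis
  proof (rule eq_matI)
    fix i j assume ij: "i < dim_row (mat m n (\<lambda>(i,j). if i = j \<and> r \<le> i \<and> i < t then - dd mu i else 0))"
      "j < dim_col (mat m n (\<lambda>(i,j). if i = j \<and> r \<le> i \<and> i < t then - dd mu i else 0))"
    then have i: "i < m" and j: "j < n" by auto
    show "snd (Em Gm) $$ (i,j) = mat m n (\<lambda>(i,j). if i = j \<and> r \<le> i \<and> i < t then - dd mu i else 0) $$ (i,j)"
    proof (cases "i < t \<and> j < t")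
      case True
      then have ij2: "i < n" "j < m" using tmn by auto
      show ?thesis
      proof (cases "i < r")
        case True
        have nz: "ss mu i \<noteq> 0" using ss_nz[OF True] .
        show ?thesis using E_entries(2)[where mu=mu, OF tmn G_carrier i j] \<open>i < t \<and> j < t\<close> i j ij2 G_entries[OF ij2] True nz
          by (cases "i = j") (auto simp: field_simps power2_eq_square)
      next
        case False
        then show ?thesis using E_entries(2)[where mu=mu, OF tmn G_carrier i j] \<open>i < t \<and> j < t\<close> i j ij2 G_entries[OF ij2] ss_z[of i] ss_z[of j]
          by auto
      qed
    next
      case False
      then show ?thesis using E_entries(2)[where mu=mu, OF tmn G_carrier i j] i j by auto
    qed
  qed (use c in auto)
qed

definition "csum = (\<Sum>i\<in>{r..<t}. (snd (mu i))\<^sup>2)"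

lemma cfro_target: "cfro (mat (t - r) (t - r) (\<lambda>(i,j). if i = j then complex_of_real (snd (mu (r + i))) else 0)) = sqrt csum"
proof -
  let ?M = "mat (t - r) (t - r) (\<lambda>(i,j). if i = j then complex_of_real (snd (mu (r + i))) else 0)"
  have "sqsum ?M = (\<Sum>i\<in>{..<t-r}. (cmod (?M $$ (i,i)))\<^sup>2) + offs ?M {..<t-r}"
    by (rule sqsum_split) auto
  also have "offs ?M {..<t-r} = 0" by (rule offs_diag) auto
  also have "(\<Sum>i\<in>{..<t-r}. (cmod (?M $$ (i,i)))\<^sup>2) = (\<Sum>i\<in>{0..<t-r}. (snd (mu (i + r)))\<^sup>2)"
    by (simp add: atLeast0LessThan add.commute)
  also have "\<dots> = csum" unfolding csum_def
    using sum.shift_bounds_nat_ivl[of "\<lambda>i. (snd (mu i))\<^sup>2" 0 r "t - r"] rt by simp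
  finally show ?thesis by (simp add: cfro_sqsum)
qed

lemma EG_fro: "dc_fro (Em Gm) = (0, sqrt csum)"
proof -
  let ?M = "snd (Em Gm)"
  have d: "dim_row ?M = m" "dim_col ?M = n" by (simp_all add: EG_snd)
  have "sqsum ?M = (\<Sum>i\<in>{r..<t}. (cmod (?M $$ (i,i)))\<^sup>2) + offs ?M {r..<t}"
    by (rule sqsum_split) (use tmn d in auto)
  also have "offs ?M {r..<t} = 0" by (rule offs_diag) (auto simp: EG_snd)
  also have "(\<Sum>i\<in>{r..<t}. (cmod (?M $$ (i,i)))\<^sup>2) = csum"
    unfolding csum_def using tmn by (intro sum.cong refl) (auto simp: EG_snd dd_def)
  finally show ?thesis using EG_fst by (simp add: dc_fro_def cfro_sqsum)
qed

lemma EY_diag: assumes Y: "Y \<in> dcmat_carrier n m" and "r \<le> i" "i < t"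
  shows "snd (Em Y) $$ (i,i) = - dd mu i"
  using E_entries(2)[where mu=mu, OF tmn Y, of i i] assms tmn ss_z[of i] by auto

lemma part_b: assumes Y: "Y \<in> dcmat_carrier n m"
  shows "dr_le (0, sqrt csum) (dc_fro (Em Y))"
proof -
  have c: "fst (Em Y) \<in> carrier_mat m n" "snd (Em Y) \<in> carrier_mat m n" using E_carrier[OF Y] by (auto simp: dcc)
  show ?thesis
  proof (cases "fst (Em Y) = 0\<^sub>m m n")
    case False
    then have "cfro (fst (Em Y)) > 0" using cfro_pos[OF c(1)] by simp
    then show ?thesis using False c by (simp add: dc_fro_def dr_le_def)
  next
    case True
    let ?M = "snd (Em Y)"
    have "sqsum ?M = (\<Sum>i\<in>{r..<t}. (cmod (?M $$ (i,i)))\<^sup>2) + offs ?M {r..<t}"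
      by (rule sqsum_split) (use tmn c in auto)
    also have "(\<Sum>i\<in>{r..<t}. (cmod (?M $$ (i,i)))\<^sup>2) = csum"
      unfolding csum_def using EY_diag[OF Y] by (intro sum.cong refl) (auto simp: dd_def)
    finally have "sqsum ?M \<ge> csum" using offs_nonneg[of ?M "{r..<t}"] by simp
    then have "cfro ?M \<ge> sqrt csum" by (simp add: cfro_sqsum)
    then show ?thesis using True c by (simp add: dc_fro_def dr_le_def)
  qed
qed

lemma part_d: "r = t \<Longrightarrow> Em Gm = (0\<^sub>m m n, 0\<^sub>m m n)"
proof -
  assume "r = t"
  then have "snd (Em Gm) = 0\<^sub>m m n" unfolding EG_snd by (intro eq_matI) auto
  then show ?thesis using EG_fst by (metis prod.collapse)
qed


lemma csum_nonneg: "csum \<ge> 0" unfolding csum_def by (simp add: sum_nonneg)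

lemma part_c: assumes Y: "Y \<in> dcmat_carrier n m" and eq: "dc_fro (Em Y) = (0, sqrt csum)"
  shows "dr_le (dc_fro Gm) (dc_fro Y)"
proof -
  obtain Ys Yd where Ye: "Y = (Ys, Yd)" by (cases Y)
  have Yc: "Ys \<in> carrier_mat n m" "Yd \<in> carrier_mat n m" using Y Ye by (auto simp: dcc)
  have c: "fst (Em Y) \<in> carrier_mat m n" "snd (Em Y) \<in> carrier_mat m n" using E_carrier[OF Y] by (auto simp: dcc)
  have F0: "fst (Em Y) = 0\<^sub>m m n"
  proof (rule ccontr)
    assume ne: "fst (Em Y) \<noteq> 0\<^sub>m m n"
    then have "cfro (fst (Em Y)) > 0" using cfro_pos[OF c(1)] by simp
    then show False using eq ne c by (simp add: dc_fro_def)
  qed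
  then have "cfro (snd (Em Y)) = sqrt csum" using eq c by (simp add: dc_fro_def)
  then have sqE: "sqsum (snd (Em Y)) = csum" using csum_nonneg sqsum_nonneg[of "snd (Em Y)"]
    by (simp add: cfro_sqsum)
  have Ysd: "Ys $$ (i,i) = 1 / ss mu i" if i: "i < r" for i
  proof -
    have it: "i < t" "i < m" "i < n" using i rt tmn by auto
    have "fst (Em Y) $$ (i,i) = 0" using F0 it by simp
    then have "ss mu i * Ys $$ (i,i) * ss mu i - ss mu i = 0"
      using E_entries(1)[where mu=mu, OF tmn Y it(2) it(3)] it Ye by simp
    then show ?thesis using ss_nz[OF i] by (simp add: field_simps)
  qed
  have E0: "snd (Em Y) $$ (i,i) = 0" if i: "i < r" for i
  proof -
    let ?M = "snd (Em Y)"
    have "sqsum ?M = (\<Sum>k\<in>insert i {r..<t}. (cmod (?M $$ (k,k)))\<^sup>2) + offs ?M (insert i {r..<t})"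
      by (rule sqsum_split) (use tmn c rt i in auto)
    also have "(\<Sum>k\<in>insert i {r..<t}. (cmod (?M $$ (k,k)))\<^sup>2) = (cmod (?M $$ (i,i)))\<^sup>2 + (\<Sum>k\<in>{r..<t}. (cmod (?M $$ (k,k)))\<^sup>2)"
      using i by simp
    also have "(\<Sum>k\<in>{r..<t}. (cmod (?M $$ (k,k)))\<^sup>2) = csum"
      unfolding csum_def using EY_diag[OF Y] by (intro sum.cong refl) (auto simp: dd_def)
    finally have "(cmod (?M $$ (i,i)))\<^sup>2 + offs ?M (insert i {r..<t}) = 0" using sqE by simp
    then have "(cmod (?M $$ (i,i)))\<^sup>2 = 0" using offs_nonneg[of ?M "insert i {r..<t}"]
      by (smt (verit) zero_le_power2)
    then show ?thesis by simp
  qed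
  have Ydd: "Yd $$ (i,i) = - dd mu i / (ss mu i)\<^sup>2" if i: "i < r" for i
  proof -
    have it: "i < t" "i < m" "i < n" using i rt tmn by auto
    have "ss mu i * Ys $$ (i,i) * dd mu i + ss mu i * Yd $$ (i,i) * ss mu i + dd mu i * Ys $$ (i,i) * ss mu i - dd mu i = 0"
      using E_entries(2)[where mu=mu, OF tmn Y it(2) it(3)] it Ye E0[OF i] by simp
    then have h1: "dd mu i + ss mu i * (ss mu i * Yd $$ (i,i)) = 0" using ss_nz[OF i] Ysd[OF i] by (simp add: field_simps)
    have "ss mu i * (ss mu i * Yd $$ (i,i)) = (dd mu i + ss mu i * (ss mu i * Yd $$ (i,i))) - dd mu i" by simp
    also have "\<dots> = - dd mu i" using h1 by simp
    finally show ?thesis using ss_nz[OF i] by (simp add: field_simps power2_eq_square)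
  qed
  obtain Gs Gd where Ge: "Gm = (Gs, Gd)" by (cases Gm)
  have Gc: "Gs \<in> carrier_mat n m" "Gd \<in> carrier_mat n m" using G_carrier Ge by (auto simp: dcc)
  have Gsi: "Gs $$ (i,j) = (if i = j \<and> i < r then 1 / ss mu i else 0)"
    "Gd $$ (i,j) = (if i = j \<and> i < r then - dd mu i / (ss mu i)\<^sup>2 else 0)" if "i < n" "j < m" for i j
    using G_entries[OF that] Ge by auto
  show ?thesis
  proof (cases "r = 0")
    case True
    have "Gs = 0\<^sub>m n m" "Gd = 0\<^sub>m n m" using Gc Gsi True by (auto intro!: eq_matI)
    then have "dc_fro Gm = (0, 0)" using Ge by (simp add: dc_fro_def cfro_def)
    then show ?thesis using dc_fro_nonneg by simp
  next
    case False
    then have r0: "0 < r" by simp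
    have nm: "0 < n" "0 < m" using r0 rt tmn by auto
    have Gsnz: "Gs \<noteq> 0\<^sub>m n m"
    proof
      assume "Gs = 0\<^sub>m n m"
      then have "Gs $$ (0,0) = 0" using nm by simp
      then show False using Gsi(1)[OF nm] r0 ss_nz[OF r0] by simp
    qed
    have Ysnz: "Ys \<noteq> 0\<^sub>m n m"
    proof
      assume "Ys = 0\<^sub>m n m"
      then have "Ys $$ (0,0) = 0" using nm by simp
      then show False using Ysd[OF r0] ss_nz[OF r0] by simp
    qed
    have dY: "dim_row Ys = n" "dim_col Ys = m" "dim_row Gs = n" "dim_col Gs = m" using Yc Gc by auto
    have sY: "sqsum Ys = (\<Sum>i\<in>{..<r}. (cmod (Ys $$ (i,i)))\<^sup>2) + offs Ys {..<r}"
      by (rule sqsum_split) (use dY rt tmn in auto)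
    have sG: "sqsum Gs = (\<Sum>i\<in>{..<r}. (cmod (Gs $$ (i,i)))\<^sup>2) + offs Gs {..<r}"
      by (rule sqsum_split) (use dY rt tmn in auto)
    have oG: "offs Gs {..<r} = 0" by (rule offs_diag) (use dY Gsi in auto)
    have sums: "(\<Sum>i\<in>{..<r}. (cmod (Ys $$ (i,i)))\<^sup>2) = (\<Sum>i\<in>{..<r}. (cmod (Gs $$ (i,i)))\<^sup>2)"
      using Ysd Gsi rt tmn by (intro sum.cong refl) auto
    have fY: "dc_fro Y = (cfro Ys, Re (ctrace (cadj Ys * Yd + cadj Yd * Ys)) / (2 * cfro Ys))"
      using Ysnz Ye dY by (simp add: dc_fro_def)
    have fG: "dc_fro Gm = (cfro Gs, Re (ctrace (cadj Gs * Gd + cadj Gd * Gs)) / (2 * cfro Gs))"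
      using Gsnz Ge dY by (simp add: dc_fro_def)
    show ?thesis
    proof (cases "offs Ys {..<r} = 0")
      case False
      then have "offs Ys {..<r} > 0" using offs_nonneg[of Ys "{..<r}"] by simp
      then have "sqsum Gs < sqsum Ys" using sY sG oG sums by simp
      then have "cfro Gs < cfro Ys" by (simp add: cfro_sqsum)
      then show ?thesis using fY fG by (simp add: dr_le_def)
    next
      case True
      have YG: "Ys = Gs"
      proof (rule eq_matI)
        fix i j assume ij: "i < dim_row Gs" "j < dim_col Gs"
        then have i: "i < n" and j: "j < m" using dY by auto
        show "Ys $$ (i,j) = Gs $$ (i,j)"
        proof (cases "i = j \<and> i < r")
          case True then show ?thesis using Ysd Gsi[OF i j] by auto
        next
          case False
          then have "Ys $$ (i,j) = 0" using offs_zero[OF True] i j dY by auto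
          then show ?thesis using Gsi[OF i j] False by auto
        qed
      qed (use dY in auto)
      have ci: "cinner Gs Yd = cinner Gs Gd"
        unfolding cinner_def
      proof (intro sum.cong refl)
        fix i j assume i: "i \<in> {..<dim_row Gs}" and j: "j \<in> {..<dim_col Gs}"
        then have i': "i < n" and j': "j < m" using dY by auto
        show "cnj (Gs $$ (i,j)) * Yd $$ (i,j) = cnj (Gs $$ (i,j)) * Gd $$ (i,j)"
          using Gsi[OF i' j'] Ydd by auto
      qed
      have "Re (ctrace (cadj Gs * Yd + cadj Yd * Gs)) = Re (ctrace (cadj Gs * Gd + cadj Gd * Gs))"
        using dual_num[OF Gc(1) Yc(2)] dual_num[OF Gc(1) Gc(2)] ci by simp
      then have "dc_fro Y = dc_fro Gm" using fY fG YG by simp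
      then show ?thesis by (simp add: dr_le_def)
    qed
  qed
qed

end



lemma unitary_carrier: "dc_unitary a P \<Longrightarrow> P \<in> dcmat_carrier a a"
  by (simp add: dc_unitary_def)

lemma unitary_left: "dc_unitary a P \<Longrightarrow> dc_mult (dc_adj P) P = dc_id a"
  by (simp add: dc_unitary_def)

lemma unitary_right: "dc_unitary a P \<Longrightarrow> dc_mult P (dc_adj P) = dc_id a"
  by (simp add: dc_unitary_def)

lemma minus_zero_eq: fixes X Y :: "complex mat"
  assumes "X \<in> carrier_mat a b" "Y \<in> carrier_mat a b" "X - Y = 0\<^sub>m a b"
  shows "X = Y"
proof (rule eq_matI)
  fix i j assume ij: "i < dim_row Y" "j < dim_col Y"
  then have "(X - Y) $$ (i,j) = 0\<^sub>m a b $$ (i,j)" by (simp only: assms(3))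
  then show "X $$ (i,j) = Y $$ (i,j)" using assms(1,2) ij by simp
qed (use assms in auto)

lemma cancel: assumes P: "P \<in> dcmat_carrier a b" and B: "B \<in> dcmat_carrier b c"
  and Q: "dc_unitary c Q" and C: "C \<in> dcmat_carrier c d" and R: "R \<in> dcmat_carrier d e"
  shows "dc_mult (dc_mult (dc_mult P B) (dc_adj Q)) (dc_mult (dc_mult Q C) R) = dc_mult (dc_mult P (dc_mult B C)) R"
proof -
  have Qc: "Q \<in> dcmat_carrier c c" "dc_adj Q \<in> dcmat_carrier c c"
    using unitary_carrier[OF Q] dc_adj_carrier by auto
  have PB: "dc_mult P B \<in> dcmat_carrier a c" using dc_mult_carrier[OF P B] .
  have QC: "dc_mult Q C \<in> dcmat_carrier c d" using dc_mult_carrier[OF Qc(1) C] .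
  have QCR: "dc_mult (dc_mult Q C) R \<in> dcmat_carrier c e" using dc_mult_carrier[OF QC R] .
  have "dc_mult (dc_mult (dc_mult P B) (dc_adj Q)) (dc_mult (dc_mult Q C) R)
      = dc_mult (dc_mult P B) (dc_mult (dc_adj Q) (dc_mult (dc_mult Q C) R))"
    by (rule dc_mult_assoc[OF PB Qc(2) QCR])
  also have "dc_mult (dc_adj Q) (dc_mult (dc_mult Q C) R) = dc_mult (dc_mult (dc_adj Q) (dc_mult Q C)) R"
    by (rule dc_mult_assoc[symmetric, OF Qc(2) QC R])
  also have "dc_mult (dc_adj Q) (dc_mult Q C) = dc_mult (dc_mult (dc_adj Q) Q) C"
    by (rule dc_mult_assoc[symmetric, OF Qc(2) Qc(1) C])
  also have "\<dots> = C" using unitary_left[OF Q] dc_mult_id_left[OF C] by simp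
  also have "dc_mult (dc_mult P B) (dc_mult C R) = dc_mult P (dc_mult B (dc_mult C R))"
    by (rule dc_mult_assoc[OF P B dc_mult_carrier[OF C R]])
  also have "dc_mult B (dc_mult C R) = dc_mult (dc_mult B C) R"
    by (rule dc_mult_assoc[symmetric, OF B C R])
  also have "dc_mult P (dc_mult (dc_mult B C) R) = dc_mult (dc_mult P (dc_mult B C)) R"
    by (rule dc_mult_assoc[symmetric, OF P dc_mult_carrier[OF B C] R])
  finally show ?thesis .
qed

lemma recover: assumes V: "dc_unitary n V" and U: "dc_unitary m U" and X: "X \<in> dcmat_carrier n m"
  shows "dc_mult (dc_mult V (dc_mult (dc_mult (dc_adj V) X) U)) (dc_adj U) = X"
proof -
  have Vc: "V \<in> dcmat_carrier n n" "dc_adj V \<in> dcmat_carrier n n"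
    using unitary_carrier[OF V] dc_adj_carrier by auto
  have Uc: "U \<in> dcmat_carrier m m" "dc_adj U \<in> dcmat_carrier m m"
    using unitary_carrier[OF U] dc_adj_carrier by auto
  have WX: "dc_mult (dc_adj V) X \<in> dcmat_carrier n m" using dc_mult_carrier[OF Vc(2) X] .
  have "dc_mult V (dc_mult (dc_mult (dc_adj V) X) U) = dc_mult (dc_mult V (dc_mult (dc_adj V) X)) U"
    by (rule dc_mult_assoc[symmetric, OF Vc(1) WX Uc(1)])
  also have "dc_mult V (dc_mult (dc_adj V) X) = dc_mult (dc_mult V (dc_adj V)) X"
    by (rule dc_mult_assoc[symmetric, OF Vc(1) Vc(2) X])
  also have "\<dots> = X" using unitary_right[OF V] dc_mult_id_left[OF X] by simp
  also have "dc_mult (dc_mult X U) (dc_adj U) = dc_mult X (dc_mult U (dc_adj U))"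
    by (rule dc_mult_assoc[OF X Uc(1) Uc(2)])
  also have "\<dots> = X" using unitary_right[OF U] dc_mult_id_right[OF X] by simp
  finally show ?thesis .
qed

lemma AXA: assumes U: "dc_unitary m U" and V: "dc_unitary n V" and S: "S \<in> dcmat_carrier m n"
  and Y: "Y \<in> dcmat_carrier n m"
  shows "dc_minus (dc_mult (dc_mult (dc_mult (dc_mult U S) (dc_adj V)) (dc_mult (dc_mult V Y) (dc_adj U)))
            (dc_mult (dc_mult U S) (dc_adj V))) (dc_mult (dc_mult U S) (dc_adj V))
       = dc_mult (dc_mult U (dc_minus (dc_mult (dc_mult S Y) S) S)) (dc_adj V)"
proof -
  have Vc: "V \<in> dcmat_carrier n n" "dc_adj V \<in> dcmat_carrier n n"
    using unitary_carrier[OF V] dc_adj_carrier by auto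
  have Uc: "U \<in> dcmat_carrier m m" "dc_adj U \<in> dcmat_carrier m m"
    using unitary_carrier[OF U] dc_adj_carrier by auto
  have 1: "dc_mult (dc_mult (dc_mult U S) (dc_adj V)) (dc_mult (dc_mult V Y) (dc_adj U))
      = dc_mult (dc_mult U (dc_mult S Y)) (dc_adj U)"
    by (rule cancel[OF Uc(1) S V Y Uc(2)])
  have 2: "dc_mult (dc_mult (dc_mult U (dc_mult S Y)) (dc_adj U)) (dc_mult (dc_mult U S) (dc_adj V))
      = dc_mult (dc_mult U (dc_mult (dc_mult S Y) S)) (dc_adj V)"
    by (rule cancel[OF Uc(1) dc_mult_carrier[OF S Y] U S Vc(2)])
  have SYS: "dc_mult (dc_mult S Y) S \<in> dcmat_carrier m n" using dc_mult_carrier[OF dc_mult_carrier[OF S Y] S] .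
  have 3: "dc_minus (dc_mult (dc_mult U (dc_mult (dc_mult S Y) S)) (dc_adj V)) (dc_mult (dc_mult U S) (dc_adj V))
      = dc_mult (dc_minus (dc_mult U (dc_mult (dc_mult S Y) S)) (dc_mult U S)) (dc_adj V)"
    by (rule dc_mult_minus_right[symmetric, OF dc_mult_carrier[OF Uc(1) SYS] dc_mult_carrier[OF Uc(1) S] Vc(2)])
  have 4: "dc_minus (dc_mult U (dc_mult (dc_mult S Y) S)) (dc_mult U S) = dc_mult U (dc_minus (dc_mult (dc_mult S Y) S) S)"
    by (rule dc_mult_minus_left[symmetric, OF Uc(1) SYS S])
  show ?thesis unfolding 1 2 3 4 ..
qed

theorem theorem4p2:
  fixes m n r t :: nat and U V A :: dcmat and mu :: "nat \<Rightarrow> dreal"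
  assumes U: "dc_unitary m U" and V: "dc_unitary n V"
    and rt: "r \<le> t" and tmn: "t \<le> min m n"
    and app: "\<And>i. i < r \<Longrightarrow> fst (mu i) > 0"
    and inf: "\<And>i. r \<le> i \<Longrightarrow> i < t \<Longrightarrow> fst (mu i) = 0 \<and> snd (mu i) > 0"
    and dec: "\<And>i. i + 1 < t \<Longrightarrow> dr_le (mu (i + 1)) (mu i)"
    and svd: "A = dc_mult (dc_mult U (dc_diag m n t mu)) (dc_adj V)"
  defines "AG \<equiv> dc_mult (dc_mult V (dc_diag n m r (\<lambda>i. dr_inv (mu i)))) (dc_adj U)"
  shows "(\<forall>X \<in> dcmat_carrier n m.
            dr_le (dc_fro (dc_minus (dc_mult (dc_mult A AG) A) A))
                  (dc_fro (dc_minus (dc_mult (dc_mult A X) A) A)))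
       \<and> (\<forall>X \<in> dcmat_carrier n m.
            dc_fro (dc_minus (dc_mult (dc_mult A X) A) A)
              = dc_fro (dc_minus (dc_mult (dc_mult A AG) A) A)
            \<longrightarrow> dr_le (dc_fro AG) (dc_fro X))
       \<and> dc_fro (dc_minus (dc_mult (dc_mult A AG) A) A)
           = (0, cfro (mat (t - r) (t - r)
                (\<lambda>(i,j). if i = j then complex_of_real (snd (mu (r + i))) else 0)))
       \<and> (r = t \<longrightarrow> dc_mult (dc_mult A AG) A = A)"
proof -
  let ?S = "dc_diag m n t mu"
  let ?G = "dc_diag n m r (\<lambda>i. dr_inv (mu i))"
  let ?E = "\<lambda>Y. dc_minus (dc_mult (dc_mult ?S Y) ?S) ?S"
  have Sc: "?S \<in> dcmat_carrier m n" by (rule S_carrier)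
  have Gc: "?G \<in> dcmat_carrier n m" by (rule S_carrier)
  have Uc: "U \<in> dcmat_carrier m m" using unitary_carrier[OF U] .
  have Vc: "V \<in> dcmat_carrier n n" using unitary_carrier[OF V] .
  have Ec: "\<And>Y. Y \<in> dcmat_carrier n m \<Longrightarrow> ?E Y \<in> dcmat_carrier m n"
    by (rule dc_minus_carrier[OF dc_mult_carrier[OF dc_mult_carrier[OF Sc] Sc] Sc])
  have key: "dc_fro (dc_minus (dc_mult (dc_mult A (dc_mult (dc_mult V Y) (dc_adj U))) A) A) = dc_fro (?E Y)"
    "dc_fro (dc_mult (dc_mult V Y) (dc_adj U)) = dc_fro Y"
    if Y: "Y \<in> dcmat_carrier n m" for Y
  proof -
    show "dc_fro (dc_minus (dc_mult (dc_mult A (dc_mult (dc_mult V Y) (dc_adj U))) A) A) = dc_fro (?E Y)"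
      unfolding svd AXA[OF U V Sc Y] using dc_fro_inv[OF U V Ec[OF Y]] .
    show "dc_fro (dc_mult (dc_mult V Y) (dc_adj U)) = dc_fro Y"
      by (rule dc_fro_inv[OF V U Y])
  qed
  define Yof where "Yof X = dc_mult (dc_mult (dc_adj V) X) U" for X
  have Yc: "Yof X \<in> dcmat_carrier n m" if "X \<in> dcmat_carrier n m" for X
    unfolding Yof_def by (rule dc_mult_carrier[OF dc_mult_carrier[OF dc_adj_carrier[OF Vc] that] Uc])
  have Xrec: "dc_mult (dc_mult V (Yof X)) (dc_adj U) = X" if "X \<in> dcmat_carrier n m" for X
    unfolding Yof_def by (rule recover[OF V U that])
  have keyX: "dc_fro (dc_minus (dc_mult (dc_mult A X) A) A) = dc_fro (?E (Yof X))"
    "dc_fro X = dc_fro (Yof X)" if X: "X \<in> dcmat_carrier n m" for X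
    using key[OF Yc[OF X]] Xrec[OF X] by simp_all
  have keyG: "dc_fro (dc_minus (dc_mult (dc_mult A AG) A) A) = dc_fro (?E ?G)"
    "dc_fro AG = dc_fro ?G"
    using key[OF Gc] unfolding AG_def by simp_all
  have EGf: "dc_fro (?E ?G) = (0, sqrt (csum r t mu))"
    by (rule EG_fro) (use rt tmn app inf in auto)
  have pb: "dr_le (0, sqrt (csum r t mu)) (dc_fro (?E Y))" if "Y \<in> dcmat_carrier n m" for Y
    by (rule part_b) (use rt tmn app inf that in auto)
  have pc: "dr_le (dc_fro ?G) (dc_fro Y)" if "Y \<in> dcmat_carrier n m" "dc_fro (?E Y) = (0, sqrt (csum r t mu))" for Y
    by (rule part_c) (use rt tmn app inf that in auto)
  have ct: "cfro (mat (t - r) (t - r) (\<lambda>(i,j). if i = j then complex_of_real (snd (mu (r + i))) else 0)) = sqrt (csum r t mu)"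
    by (rule cfro_target) (use rt tmn app inf in auto)
  have pd: "r = t \<Longrightarrow> ?E ?G = (0\<^sub>m m n, 0\<^sub>m m n)"
    by (rule part_d) (use rt tmn app inf in auto)
  have P1: "\<forall>X \<in> dcmat_carrier n m.
            dr_le (dc_fro (dc_minus (dc_mult (dc_mult A AG) A) A))
                  (dc_fro (dc_minus (dc_mult (dc_mult A X) A) A))"
    using keyG keyX EGf pb Yc by simp
  have P2: "\<forall>X \<in> dcmat_carrier n m.
            dc_fro (dc_minus (dc_mult (dc_mult A X) A) A)
              = dc_fro (dc_minus (dc_mult (dc_mult A AG) A) A)
            \<longrightarrow> dr_le (dc_fro AG) (dc_fro X)"
  proof (intro ballI impI)
    fix X assume X: "X \<in> dcmat_carrier n m"
      and e: "dc_fro (dc_minus (dc_mult (dc_mult A X) A) A) = dc_fro (dc_minus (dc_mult (dc_mult A AG) A) A)"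
    have "dc_fro (?E (Yof X)) = (0, sqrt (csum r t mu))" using e keyX[OF X] keyG EGf by simp
    then have "dr_le (dc_fro ?G) (dc_fro (Yof X))" by (rule pc[OF Yc[OF X]])
    then show "dr_le (dc_fro AG) (dc_fro X)" using keyG keyX[OF X] by simp
  qed
  have P3: "dc_fro (dc_minus (dc_mult (dc_mult A AG) A) A)
           = (0, cfro (mat (t - r) (t - r)
                (\<lambda>(i,j). if i = j then complex_of_real (snd (mu (r + i))) else 0)))"
    using keyG EGf ct by simp
  have P4: "r = t \<longrightarrow> dc_mult (dc_mult A AG) A = A"
  proof
    assume rt': "r = t"
    have Ac: "A \<in> dcmat_carrier m n"
      unfolding svd by (rule dc_mult_carrier[OF dc_mult_carrier[OF Uc Sc] dc_adj_carrier[OF Vc]])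
    have AGc: "AG \<in> dcmat_carrier n m"
      unfolding AG_def by (rule dc_mult_carrier[OF dc_mult_carrier[OF Vc Gc] dc_adj_carrier[OF Uc]])
    have AGAc: "dc_mult (dc_mult A AG) A \<in> dcmat_carrier m n"
      by (rule dc_mult_carrier[OF dc_mult_carrier[OF Ac AGc] Ac])
    have "dc_minus (dc_mult (dc_mult A AG) A) A = dc_mult (dc_mult U (?E ?G)) (dc_adj V)"
      unfolding AG_def svd by (rule AXA[OF U V Sc Gc])
    also have "?E ?G = (0\<^sub>m m n, 0\<^sub>m m n)" using pd rt' by simp
    also have "dc_mult (dc_mult U (0\<^sub>m m n, 0\<^sub>m m n)) (dc_adj V) = (0\<^sub>m m n, 0\<^sub>m m n)"
      using Uc Vc by (auto simp: dc_mult_def dc_adj_def dcc)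
    finally have z: "dc_minus (dc_mult (dc_mult A AG) A) A = (0\<^sub>m m n, 0\<^sub>m m n)" .
    obtain Ms Md where Me: "dc_mult (dc_mult A AG) A = (Ms, Md)" by (cases "dc_mult (dc_mult A AG) A")
    obtain As Ad where Ae: "A = (As, Ad)" by (cases A)
    have cc: "Ms \<in> carrier_mat m n" "Md \<in> carrier_mat m n" "As \<in> carrier_mat m n" "Ad \<in> carrier_mat m n"
      using AGAc Ac Me Ae by (auto simp: dcc)
    have "Ms - As = 0\<^sub>m m n" "Md - Ad = 0\<^sub>m m n" using z Me Ae by (auto simp: dc_minus_def)
    then have "Ms = As" "Md = Ad" using cc minus_zero_eq by blast+
    then show "dc_mult (dc_mult A AG) A = A" using Me Ae by simp
  qed
  show ?thesis using P1 P2 P3 P4 by blast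
qed



end
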